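(* Let $\mathcal{G}$ be a quantitative concurrent graph game and $P=\langle\sigma_\alpha\rangle_{\alpha\in\Omega}$ a strategy profile. If $P$ is a Nash equilibrium, then the second-strike profile $\overline{P}$ obtained from $P$ is also a Nash equilibrium (and $\mathsf{outcome}(\overline{P})=\mathsf{outcome}(P)$).
   Context: A quantitative concurrent graph game (QCG) is a tuple $\mathcal{G}=\langle \Omega, V, \{\mathsf{Act}_\alpha\}_{\alpha\in\Omega}, v_0, \delta, \mathsf{cost}, F\rangle$: finite set of players $\Omega$, finite set of states $V$, finite action sets $\mathsf{Act}_\alpha$ (all enabled everywhere), initial state $v_0$, transition function $\delta: V\times\prod_\alpha\mathsf{Act}_\alpha\to V$, cost function assigning to each transition $(u,\vec a,\delta(u,\vec a))$ a vector $(\mathsf{cost}_\alpha)_{\alpha\in\Omega}\in\mathbb{N}^\Omega$, and target sets $F_\alpha\subseteq V$. An outcome from $u$ is a sequence of transitions $\tau_0\tau_1\cdots$, $\tau_i=(s_i,\vec a_i,t_i)$, $t_i=\delta(s_i,\vec a_i)$, $s_0=u$, $s_{i+1}=t_i$. $\mathsf{cost}_\alpha(\rho)$ is the sum of $\alpha$-costs along $\rho$ until $F_\alpha$ is first visited, and $\infty$ if $F_\alpha$ is never visited. A strategy of $\alpha$ maps histories (finite sequences of transitions) to $\mathsf{Act}_\alpha$; memoryless strategies depend only on the current state. A profile $P=\langle\sigma_\alpha\rangle_{\alpha\in\Omega}$ induces an outcome $\mathsf{outcome}(P)$ from $v_0$ ($\mathsf{outcome}_u(P)$ from $u$), and $\mathsf{cost}_\alpha(P)=\mathsf{cost}_\alpha(\mathsf{outcome}(P))$.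 $P$ is a Nash equilibrium (NE) if for every $\alpha$ and every strategy $\sigma'_\alpha$, $\mathsf{cost}_\alpha(P)\le\mathsf{cost}_\alpha(P[\alpha\gets\sigma'_\alpha])$, where $P[\alpha\gets\sigma'_\alpha]$ replaces $\alpha$'s strategy by $\sigma'_\alpha$. For $\alpha\in\Omega$ and $u\in V$, let $C_\alpha(u)=\max_\sigma\min_\tau\mathsf{cost}_\alpha(\mathsf{outcome}_u(\sigma,\tau))$, max over strategies $\sigma$ of the coalition $\Omega\setminus\{\alpha\}$ (tuples of strategies of all $\beta\ne\alpha$) and min over strategies $\tau$ of $\alpha$. For each $\alpha$ fix a memoryless coalition strategy $\chi^\alpha=(\chi^\alpha_\beta)_{\beta\neq\alpha}$ that is optimal for the coalition from every state, i.e. $\mathsf{cost}_\alpha(\mathsf{outcome}_u(\chi^\alpha,\tau))\ge C_\alpha(u)$ for all $u$ and all strategies $\tau$ of $\alpha$. Second-strike profile: given $P$ with outcome $\pi=(v_0,\vec a_0,v_1)(v_1,\vec a_1,v_2)\cdots$, the profile $\overline{P}=\langle\overline{\sigma_\beta}\rangle_\beta$ is defined by: Player $\beta$ plays according to $\sigma_\beta$ as long as all other players follow $\pi$; if at some time $i$ a player $\alpha\neq\beta$ deviates from $\pi$, so that instead of $(v_i,\vec a_i,v_{i+1})$ the transition $(v_i,\vec a',v')$ is taken, then from $v'$ on Player $\beta$ plays $\chi^\alpha_\beta$. *)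

theory Defs
  imports Main "HOL-Library.Extended_Nat"
begin

(* Players: finite type 'p (Omega = UNIV); states: finite type 'v;
   actions of player alpha: the set Act alpha :: 'a set.
   A transition is (source, action vector, target). *)
type_synonym ('v,'p,'a) trans = "'v \<times> ('p \<Rightarrow> 'a) \<times> 'v"

(* A strategy gets the start state of the play and the history (list of
   transitions taken so far) and returns an action. *)
type_synonym ('v,'p,'a) strat = "'v \<Rightarrow> ('v,'p,'a) trans list \<Rightarrow> 'a"

definition cur_state :: "'v \<Rightarrow> ('v,'p,'a) trans list \<Rightarrow> 'v" where
  "cur_state u h = (if h = [] then u else snd (snd (last h)))"

fun hist :: "('v \<Rightarrow> ('p \<Rightarrow> 'a) \<Rightarrow> 'v) \<Rightarrow> ('p \<Rightarrow> ('v,'p,'a) strat) \<Rightarrow> 'v \<Rightarrow> nat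
               \<Rightarrow> ('v,'p,'a) trans list" where
  "hist \<delta> P u 0 = []"
| "hist \<delta> P u (Suc n) =
     (let h = hist \<delta> P u n; s = cur_state u h; a = (\<lambda>\<beta>. P \<beta> u h)
      in h @ [(s, a, \<delta> s a)])"

definition outcome :: "('v \<Rightarrow> ('p \<Rightarrow> 'a) \<Rightarrow> 'v) \<Rightarrow> ('p \<Rightarrow> ('v,'p,'a) strat) \<Rightarrow> 'v
                       \<Rightarrow> nat \<Rightarrow> ('v,'p,'a) trans" where
  "outcome \<delta> P u n = hist \<delta> P u (Suc n) ! n"

(* cost_alpha of an outcome: sum of alpha-costs of transitions before F alpha is
   first visited; infinity if F alpha is never visited.
   cost s a alpha = alpha-cost of transition (s, a, delta s a). *)
definition path_cost :: "('v \<Rightarrow> ('p \<Rightarrow> 'a) \<Rightarrow> 'p \<Rightarrow> nat) \<Rightarrow> ('p \<Rightarrow> 'v set) \<Rightarrow> 'p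
                         \<Rightarrow> (nat \<Rightarrow> ('v,'p,'a) trans) \<Rightarrow> enat" where
  "path_cost cost F \<alpha> \<rho> =
     (if \<exists>i. fst (\<rho> i) \<in> F \<alpha>
      then enat (\<Sum>i < (LEAST i. fst (\<rho> i) \<in> F \<alpha>). cost (fst (\<rho> i)) (fst (snd (\<rho> i))) \<alpha>)
      else \<infinity>)"

definition valid_strat :: "('p \<Rightarrow> 'a set) \<Rightarrow> 'p \<Rightarrow> ('v,'p,'a) strat \<Rightarrow> bool" where
  "valid_strat Act \<alpha> \<sigma> \<longleftrightarrow> (\<forall>u h. \<sigma> u h \<in> Act \<alpha>)"

definition valid_profile :: "('p \<Rightarrow> 'a set) \<Rightarrow> ('p \<Rightarrow> ('v,'p,'a) strat) \<Rightarrow> bool" where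
  "valid_profile Act P \<longleftrightarrow> (\<forall>\<alpha>. valid_strat Act \<alpha> (P \<alpha>))"

definition is_NE :: "('p \<Rightarrow> 'a set) \<Rightarrow> ('v \<Rightarrow> ('p \<Rightarrow> 'a) \<Rightarrow> 'v) \<Rightarrow> ('v \<Rightarrow> ('p \<Rightarrow> 'a) \<Rightarrow> 'p \<Rightarrow> nat)
                     \<Rightarrow> ('p \<Rightarrow> 'v set) \<Rightarrow> 'v \<Rightarrow> ('p \<Rightarrow> ('v,'p,'a) strat) \<Rightarrow> bool" where
  "is_NE Act \<delta> cost F v0 P \<longleftrightarrow> valid_profile Act P \<and>
     (\<forall>\<alpha> \<sigma>'. valid_strat Act \<alpha> \<sigma>' \<longrightarrow>
        path_cost cost F \<alpha> (outcome \<delta> P v0) \<le> path_cost cost F \<alpha> (outcome \<delta> (P(\<alpha> := \<sigma>')) v0))"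

(* strategies of the coalition Omega - {alpha}: the alpha component is irrelevant
   (it is always overwritten) *)
definition coalition_strats :: "('p \<Rightarrow> 'a set) \<Rightarrow> 'p \<Rightarrow> ('p \<Rightarrow> ('v,'p,'a) strat) set" where
  "coalition_strats Act \<alpha> = {\<sigma>. \<forall>\<beta>. \<beta> \<noteq> \<alpha> \<longrightarrow> valid_strat Act \<beta> (\<sigma> \<beta>)}"

definition Cval :: "('p \<Rightarrow> 'a set) \<Rightarrow> ('v \<Rightarrow> ('p \<Rightarrow> 'a) \<Rightarrow> 'v) \<Rightarrow> ('v \<Rightarrow> ('p \<Rightarrow> 'a) \<Rightarrow> 'p \<Rightarrow> nat)
                    \<Rightarrow> ('p \<Rightarrow> 'v set) \<Rightarrow> 'p \<Rightarrow> 'v \<Rightarrow> enat" where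
  "Cval Act \<delta> cost F \<alpha> u =
     (SUP \<sigma> \<in> coalition_strats Act \<alpha>. INF \<tau> \<in> {\<tau>. valid_strat Act \<alpha> \<tau>}.
        path_cost cost F \<alpha> (outcome \<delta> (\<sigma>(\<alpha> := \<tau>)) u))"

definition memoryless :: "('v \<Rightarrow> 'a) \<Rightarrow> ('v,'p,'a) strat" where
  "memoryless f = (\<lambda>u h. f (cur_state u h))"

definition optimal_coalition :: "('p \<Rightarrow> 'a set) \<Rightarrow> ('v \<Rightarrow> ('p \<Rightarrow> 'a) \<Rightarrow> 'v) \<Rightarrow> ('v \<Rightarrow> ('p \<Rightarrow> 'a) \<Rightarrow> 'p \<Rightarrow> nat)
                    \<Rightarrow> ('p \<Rightarrow> 'v set) \<Rightarrow> ('p \<Rightarrow> 'p \<Rightarrow> 'v \<Rightarrow> 'a) \<Rightarrow> bool" where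
  "optimal_coalition Act \<delta> cost F \<chi> \<longleftrightarrow>
     (\<forall>\<alpha> \<beta> v. \<beta> \<noteq> \<alpha> \<longrightarrow> \<chi> \<alpha> \<beta> v \<in> Act \<beta>) \<and>
     (\<forall>\<alpha> u \<tau>. valid_strat Act \<alpha> \<tau> \<longrightarrow>
        path_cost cost F \<alpha> (outcome \<delta> ((\<lambda>\<beta>. memoryless (\<chi> \<alpha> \<beta>))(\<alpha> := \<tau>)) u)
          \<ge> Cval Act \<delta> cost F \<alpha> u)"

(* In all other cases (history
   follows pi, or other situations not covered by the paper) beta plays sigma_beta. *)
definition second_strike :: "('v \<Rightarrow> ('p \<Rightarrow> 'a) \<Rightarrow> 'v) \<Rightarrow> ('p \<Rightarrow> 'p \<Rightarrow> 'v \<Rightarrow> 'a) \<Rightarrow> 'v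
                             \<Rightarrow> ('p \<Rightarrow> ('v,'p,'a) strat) \<Rightarrow> ('p \<Rightarrow> ('v,'p,'a) strat)" where
  "second_strike \<delta> \<chi> v0 P = (\<lambda>\<beta> u h.
     (let \<pi> = outcome \<delta> P v0 in
      if u = v0 \<and> (\<exists>i < length h. h ! i \<noteq> \<pi> i) then
        (let i = (LEAST i. i < length h \<and> h ! i \<noteq> \<pi> i);
             D = {\<gamma>. fst (snd (h ! i)) \<gamma> \<noteq> fst (snd (\<pi> i)) \<gamma>}
         in if (\<exists>\<alpha>. D = {\<alpha>} \<and> \<alpha> \<noteq> \<beta>) then \<chi> (the_elem D) \<beta> (cur_state u h)
            else P \<beta> u h)
      else P \<beta> u h))"

end

theory Submission
  imports Defs
begin

lemma hist_length[simp]: "length (hist \<delta> P u n) = n"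
  by (induction n) (simp_all add: Let_def)

lemma hist_Suc_alt: "hist \<delta> P u (Suc n) = hist \<delta> P u n @ [outcome \<delta> P u n]"
  by (simp add: outcome_def Let_def nth_append)

lemma outcome_alt: "outcome \<delta> P u n =
   (cur_state u (hist \<delta> P u n), (\<lambda>\<beta>. P \<beta> u (hist \<delta> P u n)),
    \<delta> (cur_state u (hist \<delta> P u n)) (\<lambda>\<beta>. P \<beta> u (hist \<delta> P u n)))"
  by (simp add: outcome_def Let_def nth_append)

declare hist.simps(2)[simp del]

lemma sum_split_nat: fixes f :: "nat \<Rightarrow> nat" shows "(\<Sum>i<k+m. f i) = (\<Sum>i<k. f i) + (\<Sum>i<m. (f (k+i)::nat))"
  by (induct m) auto

lemma hist_nth: "k < n \<Longrightarrow> hist \<delta> P u n ! k = outcome \<delta> P u k"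
proof (induction n)
  case 0 then show ?case by simp
next
  case (Suc n)
  then show ?case
    by (cases "k < n") (auto simp: hist_Suc_alt nth_append less_Suc_eq)
qed

lemma hist_cong:
  assumes "\<And>m \<beta>. m < N \<Longrightarrow> P1 \<beta> u (hist \<delta> P1 u m) = P2 \<beta> u (hist \<delta> P1 u m)"
  shows "hist \<delta> P1 u N = hist \<delta> P2 u N"
  using assms
proof (induction N)
  case 0 then show ?case by simp
next
  case (Suc N)
  then have IH: "hist \<delta> P1 u N = hist \<delta> P2 u N" by simp
  have "(\<lambda>\<beta>. P1 \<beta> u (hist \<delta> P1 u N)) = (\<lambda>\<beta>. P2 \<beta> u (hist \<delta> P1 u N))"
    using Suc.prems by auto
  then show ?case using IH by (simp add: Let_def hist.simps(2))
qed

lemma cur_state_append: "cur_state u (H @ h) = cur_state (cur_state u H) h"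
  by (simp add: cur_state_def)

lemma hist_shift:
  assumes "\<And>\<beta> h'. Q \<beta> (cur_state u (hist \<delta> P u k)) h' = P \<beta> u (hist \<delta> P u k @ h')"
  shows "hist \<delta> P u (k+n) = hist \<delta> P u k @ hist \<delta> Q (cur_state u (hist \<delta> P u k)) n"
proof (induction n)
  case 0 then show ?case by simp
next
  case (Suc n)
  let ?H = "hist \<delta> P u k" and ?u = "cur_state u (hist \<delta> P u k)"
  have "hist \<delta> P u (k + Suc n) = hist \<delta> P u (k+n) @ [outcome \<delta> P u (k+n)]"
    by (simp add: hist_Suc_alt)
  also have "outcome \<delta> P u (k+n) = outcome \<delta> Q ?u n"
    unfolding outcome_alt Suc cur_state_append assms by simp
  finally show ?case using Suc by (simp add: hist_Suc_alt)
qed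

lemma outcome_shift:
  assumes "\<And>\<beta> h'. Q \<beta> (cur_state u (hist \<delta> P u k)) h' = P \<beta> u (hist \<delta> P u k @ h')"
  shows "outcome \<delta> P u (k+n) = outcome \<delta> Q (cur_state u (hist \<delta> P u k)) n"
proof -
  have "outcome \<delta> P u (k+n) = hist \<delta> P u (k + Suc n) ! (k+n)"
    by (simp add: outcome_def)
  also have "\<dots> = outcome \<delta> Q (cur_state u (hist \<delta> P u k)) n"
    unfolding hist_shift[where Q=Q and P=P and n="Suc n", OF assms] by (simp add: nth_append hist_nth)
  finally show ?thesis .
qed

lemma pc_shift:
  assumes "\<forall>j<k. fst (\<rho> j) \<notin> F \<alpha>"
  shows "path_cost cost F \<alpha> \<rho> = enat (\<Sum>j<k. cost (fst (\<rho> j)) (fst (snd (\<rho> j))) \<alpha>)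
           + path_cost cost F \<alpha> (\<lambda>n. \<rho> (k+n))"
proof (cases "\<exists>i. fst (\<rho> i) \<in> F \<alpha>")
  case True
  then obtain i where i: "fst (\<rho> i) \<in> F \<alpha>" by blast
  with assms have "k \<le> i" by (meson not_le)
  then have ex2: "\<exists>n. fst (\<rho> (k+n)) \<in> F \<alpha>" using i by (metis le_add_diff_inverse)
  let ?L = "LEAST i. fst (\<rho> i) \<in> F \<alpha>" and ?M = "LEAST n. fst (\<rho> (k+n)) \<in> F \<alpha>"
  have M: "fst (\<rho> (k + ?M)) \<in> F \<alpha>" using ex2 by (rule LeastI_ex)
  have L: "fst (\<rho> ?L) \<in> F \<alpha>" using True by (rule LeastI_ex)
  have "k \<le> ?L" using assms L by (meson not_le)
  then have "?M \<le> ?L - k" using L by (intro Least_le) simp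
  moreover have "?L \<le> k + ?M" using M by (rule Least_le)
  ultimately have LM: "?L = k + ?M" using \<open>k \<le> ?L\<close> by linarith
  show ?thesis unfolding path_cost_def using True ex2
    by (simp only: LM sum_split_nat if_True plus_enat_simps)
next
  case False
  then have "\<not> (\<exists>n. fst (\<rho> (k+n)) \<in> F \<alpha>)" by blast
  then show ?thesis unfolding path_cost_def using False by simp
qed

lemma pc_early:
  assumes "j0 \<le> i" "fst (\<rho> j0) \<in> F \<alpha>" "\<forall>j\<le>i. fst (\<rho> j) = fst (\<rho>' j)" "\<forall>j<i. \<rho> j = \<rho>' j"
  shows "path_cost cost F \<alpha> \<rho> = path_cost cost F \<alpha> \<rho>'"
proof -
  have e1: "\<exists>j. fst (\<rho> j) \<in> F \<alpha>" using assms by blast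
  have e2: "\<exists>j. fst (\<rho>' j) \<in> F \<alpha>" using assms by metis
  let ?L = "LEAST i. fst (\<rho> i) \<in> F \<alpha>" and ?L' = "LEAST i. fst (\<rho>' i) \<in> F \<alpha>"
  have "?L \<le> j0" using assms(2) by (rule Least_le)
  have "?L' \<le> j0" using assms by (intro Least_le) auto
  have eq: "?L = ?L'"
  proof (rule Least_equality)
    show "fst (\<rho> ?L') \<in> F \<alpha>" using LeastI_ex[OF e2] \<open>?L' \<le> j0\<close> assms by auto
    show "\<And>y. fst (\<rho> y) \<in> F \<alpha> \<Longrightarrow> ?L' \<le> y"
      using \<open>?L' \<le> j0\<close> assms by (metis Least_le le_trans nat_le_linear)
  qed
  show ?thesis unfolding path_cost_def using e1 e2 eq \<open>?L \<le> j0\<close> assms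
    by (auto intro!: sum.cong)
qed

lemma ss_nodev:
  assumes "\<forall>j<length h. h!j = outcome \<delta> P v0 j"
  shows "second_strike \<delta> \<chi> v0 P \<beta> u h = P \<beta> u h"
  using assms unfolding second_strike_def by (auto simp: Let_def)

lemma ss_dev:
  assumes "i < length h" "\<forall>j<i. h!j = outcome \<delta> P v0 j" "h!i \<noteq> outcome \<delta> P v0 i"
    "{\<gamma>. fst (snd (h!i)) \<gamma> \<noteq> fst (snd (outcome \<delta> P v0 i)) \<gamma>} = {\<alpha>}" "\<beta> \<noteq> \<alpha>"
  shows "second_strike \<delta> \<chi> v0 P \<beta> v0 h = \<chi> \<alpha> \<beta> (cur_state v0 h)"
proof -
  have L: "(LEAST i. i < length h \<and> h ! i \<noteq> outcome \<delta> P v0 i) = i"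
  proof (rule Least_equality)
    show "i < length h \<and> h ! i \<noteq> outcome \<delta> P v0 i" using assms by simp
    show "\<And>y. y < length h \<and> h ! y \<noteq> outcome \<delta> P v0 y \<Longrightarrow> i \<le> y"
      using assms(2) by (meson not_le)
  qed
  show ?thesis unfolding second_strike_def Let_def L using assms by auto
qed

theorem lemma1:
  fixes Act :: "'p::finite \<Rightarrow> 'a set"
    and \<delta> :: "'v::finite \<Rightarrow> ('p \<Rightarrow> 'a) \<Rightarrow> 'v"
    and cost :: "'v \<Rightarrow> ('p \<Rightarrow> 'a) \<Rightarrow> 'p \<Rightarrow> nat"
    and F :: "'p \<Rightarrow> 'v set"
    and v0 :: 'v
    and \<chi> :: "'p \<Rightarrow> 'p \<Rightarrow> 'v \<Rightarrow> 'a"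
    and P :: "'p \<Rightarrow> ('v,'p,'a) strat"
  assumes "\<And>\<alpha>. finite (Act \<alpha>)"
    and "\<And>\<alpha>. Act \<alpha> \<noteq> {}"
    and "optimal_coalition Act \<delta> cost F \<chi>"
    and "is_NE Act \<delta> cost F v0 P"
  shows "is_NE Act \<delta> cost F v0 (second_strike \<delta> \<chi> v0 P)
         \<and> outcome \<delta> (second_strike \<delta> \<chi> v0 P) v0 = outcome \<delta> P v0"
proof -
  let ?\<pi> = "outcome \<delta> P v0"
  define PB where "PB = second_strike \<delta> \<chi> v0 P"
  have NE: "valid_profile Act P"
    and NEc: "\<And>\<alpha> \<sigma>'. valid_strat Act \<alpha> \<sigma>' \<Longrightarrow>
      path_cost cost F \<alpha> ?\<pi> \<le> path_cost cost F \<alpha> (outcome \<delta> (P(\<alpha> := \<sigma>')) v0)"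
    using assms(4) unfolding is_NE_def by auto
  have oc1: "\<And>\<alpha> \<beta> v. \<beta> \<noteq> \<alpha> \<Longrightarrow> \<chi> \<alpha> \<beta> v \<in> Act \<beta>"
    and oc2: "\<And>\<alpha> u \<tau>. valid_strat Act \<alpha> \<tau> \<Longrightarrow>
      path_cost cost F \<alpha> (outcome \<delta> ((\<lambda>\<beta>. memoryless (\<chi> \<alpha> \<beta>))(\<alpha> := \<tau>)) u)
        \<ge> Cval Act \<delta> cost F \<alpha> u"
    using assms(3) unfolding optimal_coalition_def by auto
  have histPB: "\<And>n. hist \<delta> PB v0 n = hist \<delta> P v0 n"
    by (rule hist_cong[symmetric]) (simp add: PB_def ss_nodev hist_nth)
  have outc: "outcome \<delta> PB v0 = ?\<pi>" by (rule ext) (simp add: outcome_def histPB)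
  have validPB: "valid_profile Act PB"
    using NE oc1 unfolding valid_profile_def valid_strat_def PB_def second_strike_def Let_def
    by auto
  have "\<forall>\<alpha> \<sigma>'. valid_strat Act \<alpha> \<sigma>' \<longrightarrow>
        path_cost cost F \<alpha> ?\<pi> \<le> path_cost cost F \<alpha> (outcome \<delta> (PB(\<alpha> := \<sigma>')) v0)"
  proof (intro allI impI)
    fix \<alpha> and \<sigma>' :: "('v,'p,'a) strat" assume vs: "valid_strat Act \<alpha> \<sigma>'"
    define R where "R = PB(\<alpha> := \<sigma>')"
    define \<rho> where "\<rho> = outcome \<delta> R v0"
    show "path_cost cost F \<alpha> ?\<pi> \<le> path_cost cost F \<alpha> (outcome \<delta> (PB(\<alpha> := \<sigma>')) v0)"
    proof (cases "\<forall>n. \<rho> n = ?\<pi> n")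
      case True
      then have "outcome \<delta> (PB(\<alpha> := \<sigma>')) v0 = ?\<pi>" using \<rho>_def R_def by auto
      then show ?thesis by simp
    next
      case False
      define i where "i = (LEAST n. \<rho> n \<noteq> ?\<pi> n)"
      have \<rho>i: "\<rho> i \<noteq> ?\<pi> i" using False unfolding i_def by (metis (mono_tags) LeastI_ex)
      have before: "\<forall>j<i. \<rho> j = ?\<pi> j" unfolding i_def using not_less_Least by blast
      define H where "H = hist \<delta> R v0 i"
      have HP: "H = hist \<delta> P v0 i"
        unfolding H_def by (rule nth_equalityI) (auto simp: hist_nth \<rho>_def[symmetric] before)
      have Hnod: "\<forall>j<length H. H!j = ?\<pi> j" using HP by (simp add: hist_nth)
      have \<rho>i_eq: "\<rho> i = (cur_state v0 H, (\<lambda>\<beta>. R \<beta> v0 H), \<delta> (cur_state v0 H) (\<lambda>\<beta>. R \<beta> v0 H))"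
        unfolding \<rho>_def H_def by (rule outcome_alt)
      have \<pi>i_eq: "?\<pi> i = (cur_state v0 H, (\<lambda>\<beta>. P \<beta> v0 H), \<delta> (cur_state v0 H) (\<lambda>\<beta>. P \<beta> v0 H))"
        unfolding HP by (rule outcome_alt)
      have Rnd: "\<forall>\<beta>. \<beta> \<noteq> \<alpha> \<longrightarrow> R \<beta> v0 H = P \<beta> v0 H"
        using Hnod by (simp add: R_def PB_def ss_nodev)
      have D: "{\<gamma>. fst (snd (\<rho> i)) \<gamma> \<noteq> fst (snd (?\<pi> i)) \<gamma>} = {\<alpha>}"
      proof -
        have "(\<lambda>\<beta>. R \<beta> v0 H) \<noteq> (\<lambda>\<beta>. P \<beta> v0 H)" using \<rho>i \<rho>i_eq \<pi>i_eq by auto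
        then have "R \<alpha> v0 H \<noteq> P \<alpha> v0 H" using Rnd by auto
        then show ?thesis using Rnd \<rho>i_eq \<pi>i_eq by auto
      qed
      define Hr where "Hr = hist \<delta> R v0 (Suc i)"
      have Hr: "Hr = H @ [\<rho> i]" by (simp add: Hr_def H_def \<rho>_def hist_Suc_alt)
      define v' where "v' = cur_state v0 Hr"
      have Rdev: "\<And>\<beta> h'. \<beta> \<noteq> \<alpha> \<Longrightarrow> R \<beta> v0 (Hr @ h') = \<chi> \<alpha> \<beta> (cur_state v0 (Hr @ h'))"
      proof -
        fix \<beta> h' assume "\<beta> \<noteq> \<alpha>"
        have lenH: "length H = i" by (simp add: H_def)
        show "R \<beta> v0 (Hr @ h') = \<chi> \<alpha> \<beta> (cur_state v0 (Hr @ h'))"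
        proof -
          have "R \<beta> v0 (Hr @ h') = second_strike \<delta> \<chi> v0 P \<beta> v0 (Hr @ h')"
            using \<open>\<beta> \<noteq> \<alpha>\<close> by (simp add: R_def PB_def)
          also have "\<dots> = \<chi> \<alpha> \<beta> (cur_state v0 (Hr @ h'))"
            by (rule ss_dev[where i=i]) (use Hnod lenH \<rho>i D \<open>\<beta> \<noteq> \<alpha>\<close> in \<open>auto simp: Hr nth_append\<close>)
          finally show ?thesis .
        qed
      qed
      define \<tau> where "\<tau> = (\<lambda>(u::'v) h'. \<sigma>' v0 (Hr @ h'))"
      define Q where "Q = (\<lambda>\<beta>. memoryless (\<chi> \<alpha> \<beta>))(\<alpha> := \<tau>)"
      have Qeq: "\<And>\<beta> h'. Q \<beta> (cur_state v0 (hist \<delta> R v0 (Suc i))) h' = R \<beta> v0 (hist \<delta> R v0 (Suc i) @ h')"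
        unfolding Hr_def[symmetric] using Rdev by (auto simp: Q_def \<tau>_def memoryless_def R_def cur_state_append)
      have \<rho>shift: "\<And>n. \<rho> (Suc i + n) = outcome \<delta> Q v' n"
        unfolding \<rho>_def v'_def Hr_def by (rule outcome_shift[where Q=Q, OF Qeq])
      have v\<tau>: "valid_strat Act \<alpha> \<tau>" using vs by (simp add: valid_strat_def \<tau>_def)
      have costQ: "path_cost cost F \<alpha> (outcome \<delta> Q v') \<ge> Cval Act \<delta> cost F \<alpha> v'"
        unfolding Q_def by (rule oc2[OF v\<tau>])
      define S where "S = (\<lambda>\<beta> (u::'v) h'. P \<beta> v0 (Hr @ h'))"
      have Sco: "S \<in> coalition_strats Act \<alpha>"
        using NE by (simp add: coalition_strats_def S_def valid_profile_def valid_strat_def)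
      define T where "T = {\<tau> :: ('v,'p,'a) strat. valid_strat Act \<alpha> \<tau>}"
      have Tne: "P \<alpha> \<in> T" using NE by (simp add: T_def valid_profile_def)
      define f where "f = (\<lambda>\<tau>. path_cost cost F \<alpha> (outcome \<delta> (S(\<alpha> := \<tau>)) v'))"
      have "Inf (f ` T) \<in> f ` T"
        unfolding Inf_enat_def using Tne by (auto intro: LeastI)
      then obtain \<tau>0 where \<tau>0T: "\<tau>0 \<in> T" and \<tau>0inf: "f \<tau>0 = Inf (f ` T)" by auto
      have fle: "f \<tau>0 \<le> Cval Act \<delta> cost F \<alpha> v'"
        unfolding Cval_def by (rule SUP_upper2[OF Sco]) (use \<tau>0inf in \<open>simp add: f_def T_def\<close>)
      define \<sigma>'' where "\<sigma>'' = (\<lambda>u h. if Suc i \<le> length h \<and> take (Suc i) h = Hr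
                                    then \<tau>0 v' (drop (Suc i) h) else \<sigma>' u h)"
      define R2 where "R2 = P(\<alpha> := \<sigma>'')"
      have v\<sigma>'': "valid_strat Act \<alpha> \<sigma>''"
        using vs \<tau>0T by (simp add: valid_strat_def \<sigma>''_def T_def)
      have h2: "hist \<delta> R v0 (Suc i) = hist \<delta> R2 v0 (Suc i)"
      proof (rule hist_cong)
        fix m \<beta> assume m: "m < Suc i"
        have hn: "\<forall>j<length (hist \<delta> R v0 m). hist \<delta> R v0 m ! j = ?\<pi> j"
          using before m by (auto simp: hist_nth \<rho>_def[symmetric])
        show "R \<beta> v0 (hist \<delta> R v0 m) = R2 \<beta> v0 (hist \<delta> R v0 m)"
          using hn m by (auto simp: R_def R2_def PB_def ss_nodev \<sigma>''_def)
      qed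
      have lenHr: "length Hr = Suc i" by (simp add: Hr_def)
      have Hr2: "hist \<delta> R2 v0 (Suc i) = Hr" using h2 Hr_def by simp
      have R2eq: "\<And>\<beta> h'. (S(\<alpha>:=\<tau>0)) \<beta> (cur_state v0 (hist \<delta> R2 v0 (Suc i))) h'
                       = R2 \<beta> v0 (hist \<delta> R2 v0 (Suc i) @ h')"
        unfolding Hr2 using lenHr by (simp add: S_def R2_def \<sigma>''_def v'_def)
      have \<rho>2shift: "\<And>n. outcome \<delta> R2 v0 (Suc i + n) = outcome \<delta> (S(\<alpha>:=\<tau>0)) v' n"
        using outcome_shift[where Q="S(\<alpha>:=\<tau>0)", OF R2eq] Hr2 v'_def by simp
      have \<rho>2pre: "\<And>j. j < Suc i \<Longrightarrow> outcome \<delta> R2 v0 j = \<rho> j"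
        by (metis h2 hist_nth \<rho>_def)
      have srcs: "\<forall>j\<le>i. fst (\<rho> j) = fst (?\<pi> j)"
        using before \<rho>i_eq \<pi>i_eq by (auto simp: le_less)
      show ?thesis
      proof (cases "\<exists>j\<le>i. fst (\<rho> j) \<in> F \<alpha>")
        case True
        then obtain j0 where j0: "j0 \<le> i" "fst (\<rho> j0) \<in> F \<alpha>" by blast
        have "path_cost cost F \<alpha> \<rho> = path_cost cost F \<alpha> ?\<pi>"
          by (rule pc_early[where \<rho>=\<rho> and \<rho>'="?\<pi>" and i=i and F=F and \<alpha>=\<alpha>, OF j0 srcs before])
        then show ?thesis by (simp add: \<rho>_def R_def)
      next
        case False
        then have nF: "\<forall>j<Suc i. fst (\<rho> j) \<notin> F \<alpha>" by auto
        have nF2: "\<forall>j<Suc i. fst (outcome \<delta> R2 v0 j) \<notin> F \<alpha>" using nF \<rho>2pre by simp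
        let ?pre = "enat (\<Sum>j<Suc i. cost (fst (\<rho> j)) (fst (snd (\<rho> j))) \<alpha>)"
        have sumeq: "(\<Sum>j<Suc i. cost (fst (outcome \<delta> R2 v0 j)) (fst (snd (outcome \<delta> R2 v0 j))) \<alpha>)
                   = (\<Sum>j<Suc i. cost (fst (\<rho> j)) (fst (snd (\<rho> j))) \<alpha>)"
          by (rule sum.cong) (simp_all add: \<rho>2pre)
        have "path_cost cost F \<alpha> ?\<pi> \<le> path_cost cost F \<alpha> (outcome \<delta> R2 v0)"
          using NEc[OF v\<sigma>''] R2_def by simp
        also have "\<dots> = ?pre + f \<tau>0"
          using pc_shift[where F=F and \<alpha>=\<alpha> and cost=cost, OF nF2] \<rho>2shift sumeq by (simp add: f_def)
        also have "\<dots> \<le> ?pre + Cval Act \<delta> cost F \<alpha> v'"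
          using fle by (rule add_left_mono)
        also have "\<dots> \<le> ?pre + path_cost cost F \<alpha> (outcome \<delta> Q v')"
          using costQ by (rule add_left_mono)
        also have "\<dots> = path_cost cost F \<alpha> \<rho>"
          using pc_shift[where F=F and \<alpha>=\<alpha> and cost=cost, OF nF] \<rho>shift by simp
        finally show ?thesis by (simp add: \<rho>_def R_def)
      qed
    qed
  qed
  then show ?thesis using validPB outc unfolding is_NE_def PB_def by simp
qed

end
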